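(* There exists a $9\times 9$ bimagic square whose $81$ entries are pairwise distinct palindromic strings of length $8$ over $\{0,1,2\}$ (read as decimal numbers, leading zeros allowed), with magic sum $S1=99999999$, and such that each of the nine $3\times3$ blocks has entry sum $99999999$.
   Context: A magic square of order $n$ is an $n\times n$ array of numbers in which the sums of the entries of each row, of each column and of each of the two principal diagonals all equal a common value $S1$. It is bimagic if in addition the sums of the squares of the entries of each row, each column and each of the two principal diagonals all equal a common value $S2$. The $3\times3$ blocks are the subarrays with rows $3p+1,\dots,3p+3$ and columns $3q+1,\dots,3q+3$, $p,q\in\{0,1,2\}$. *)

theory Defs
  imports Main
begin

definition dec_val :: "nat list \<Rightarrow> nat" where
  "dec_val ds = foldl (\<lambda>acc d. 10 * acc + d) 0 ds"

definition pal8_012 :: "nat list \<Rightarrow> bool" where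
  "pal8_012 ds \<longleftrightarrow> length ds = 8 \<and> set ds \<subseteq> {0,1,2} \<and> rev ds = ds"

definition magic_sq :: "nat \<Rightarrow> (nat \<Rightarrow> nat \<Rightarrow> nat) \<Rightarrow> nat \<Rightarrow> bool" where
  "magic_sq n A S \<longleftrightarrow>
     (\<forall>i<n. (\<Sum>j<n. A i j) = S) \<and>
     (\<forall>j<n. (\<Sum>i<n. A i j) = S) \<and>
     (\<Sum>i<n. A i i) = S \<and>
     (\<Sum>i<n. A i (n - 1 - i)) = S"

definition bimagic_sq :: "nat \<Rightarrow> (nat \<Rightarrow> nat \<Rightarrow> nat) \<Rightarrow> nat \<Rightarrow> bool" where
  "bimagic_sq n A S1 \<longleftrightarrow> magic_sq n A S1 \<and>
     (\<exists>S2. magic_sq n (\<lambda>i j. (A i j)^2) S2)"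

end

theory Submission
  imports Defs
begin

definition d0 :: "nat \<Rightarrow> nat \<Rightarrow> nat" where
  "d0 i j = (2 * (i div 3) + 1 * (j mod 3) + 1) mod 3"

definition d1 :: "nat \<Rightarrow> nat \<Rightarrow> nat" where
  "d1 i j = (1 * (i mod 3) + 1 * (j div 3) + 2) mod 3"

definition d2 :: "nat \<Rightarrow> nat \<Rightarrow> nat" where
  "d2 i j = (2 * (i div 3) + 2 * (i mod 3) + 1 * (j div 3) + 2 * (j mod 3) + 1) mod 3"

definition d3 :: "nat \<Rightarrow> nat \<Rightarrow> nat" where
  "d3 i j = (1 * (i div 3) + 2 * (i mod 3) + 1 * (j div 3) + 1 * (j mod 3) + 1) mod 3"

definition h :: "nat \<Rightarrow> nat \<Rightarrow> nat list" where
  "h i j = [d0 i j, d1 i j, d2 i j, d3 i j]"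

definition MM :: "nat \<Rightarrow> nat \<Rightarrow> nat list" where
  "MM i j = h i j @ rev (h i j)"

definition v :: "nat \<Rightarrow> nat \<Rightarrow> nat" where
  "v i j = 10000001 * d0 i j + 1000010 * d1 i j + 100100 * d2 i j + 11000 * d3 i j"

definition decode :: "nat list \<Rightarrow> nat \<times> nat" where
  "decode x = (3 * ((1 * (x!0) + 2 * (x!2) + 1 * (x!3) + 2) mod 3) + ((2 * (x!1) + 2 * (x!2) + 2 * (x!3) + 1) mod 3), 3 * ((2 * (x!1) + 1 * (x!2) + 1 * (x!3) + 0) mod 3) + ((2 * (x!0) + 2 * (x!2) + 1 * (x!3) + 1) mod 3))"

lemma set9: "{..<(9::nat)} = {0,1,2,3,4,5,6,7,8}"
  by (auto simp: numeral_eq_Suc lessThan_Suc)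
lemma all9: "(\<forall>i<(9::nat). P i) \<longleftrightarrow> P 0 \<and> P 1 \<and> P 2 \<and> P 3 \<and> P 4 \<and> P 5 \<and> P 6 \<and> P 7 \<and> P 8"
proof -
  have "(\<forall>i<(9::nat). P i) \<longleftrightarrow> (\<forall>i\<in>{..<9}. P i)" by auto
  also have "\<dots> \<longleftrightarrow> P 0 \<and> P 1 \<and> P 2 \<and> P 3 \<and> P 4 \<and> P 5 \<and> P 6 \<and> P 7 \<and> P 8"
    unfolding set9 by simp
  finally show ?thesis .
qed
lemma set3: "{..<(3::nat)} = {0,1,2}"
  by (auto simp: numeral_eq_Suc lessThan_Suc)
lemma all3: "(\<forall>i<(3::nat). P i) \<longleftrightarrow> P 0 \<and> P 1 \<and> P 2"
proof -
  have "(\<forall>i<(3::nat). P i) \<longleftrightarrow> (\<forall>i\<in>{..<3}. P i)" by auto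
  also have "\<dots> \<longleftrightarrow> P 0 \<and> P 1 \<and> P 2"
    unfolding set3 by simp
  finally show ?thesis .
qed

lemma sum9: "(\<Sum>i<(9::nat). f i) = f 0 + f 1 + f 2 + f 3 + f 4 + f 5 + f 6 + f 7 + (f 8::nat)"
  by (simp add: numeral_eq_Suc lessThan_Suc)

lemma sum3: "(\<Sum>i<(3::nat). f i) = f 0 + f 1 + (f 2::nat)"
  by (simp add: numeral_eq_Suc lessThan_Suc)

lemma dec_MM: "dec_val (MM i j) = v i j"
  by (simp add: MM_def h_def dec_val_def v_def algebra_simps)

lemma pal: "pal8_012 (MM i j)"
proof -
  have "d0 i j < 3" "d1 i j < 3" "d2 i j < 3" "d3 i j < 3"
    by (simp_all add: d0_def d1_def d2_def d3_def)
  then show ?thesis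
    by (auto simp: pal8_012_def MM_def h_def)
qed

lemma decode_h: "\<forall>i<9. \<forall>j<9. decode (h i j) = (i, j)"
  unfolding all9 by (simp add: decode_def h_def d0_def d1_def d2_def d3_def)

lemma inj: "\<forall>i<9. \<forall>j<9. \<forall>k<9. \<forall>l<9. MM i j = MM k l \<longrightarrow> i = k \<and> j = l"
proof (intro allI impI)
  fix i j k l :: nat
  assume a: "i<9" "j<9" "k<9" "l<9" "MM i j = MM k l"
  have "take 4 (MM i j) = take 4 (MM k l)" using a(5) by simp
  then have "h i j = h k l" by (simp add: MM_def h_def)
  then have "decode (h i j) = decode (h k l)" by simp
  then show "i = k \<and> j = l" using decode_h a(1-4) by simp
qed

lemma vals:
  "v 0 0 = 12111121"
  "v 0 1 = 22022022"
  "v 0 2 = 2200220"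
  "v 0 3 = 10222201"
  "v 0 4 = 20100102"
  "v 0 5 = 11000"
  "v 0 6 = 11000011"
  "v 0 7 = 21211212"
  "v 0 8 = 1122110"
  "v 1 0 = 10000001"
  "v 1 1 = 20211202"
  "v 1 2 = 122100"
  "v 1 3 = 11111111"
  "v 1 4 = 21022012"
  "v 1 5 = 1200210"
  "v 1 6 = 12222221"
  "v 1 7 = 22100122"
  "v 1 8 = 2011020"
  "v 2 0 = 11222211"
  "v 2 1 = 21100112"
  "v 2 2 = 1011010"
  "v 2 3 = 12000021"
  "v 2 4 = 22211222"
  "v 2 5 = 2122120"
  "v 2 6 = 10111101"
  "v 2 7 = 20022002"
  "v 2 8 = 200200"
  "v 3 0 = 2022020"
  "v 3 1 = 12200221"
  "v 3 2 = 22111122"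
  "v 3 3 = 100100"
  "v 3 4 = 10011001"
  "v 3 5 = 20222202"
  "v 3 6 = 1211210"
  "v 3 7 = 11122111"
  "v 3 8 = 21000012"
  "v 4 0 = 211200"
  "v 4 1 = 10122101"
  "v 4 2 = 20000002"
  "v 4 3 = 1022010"
  "v 4 4 = 11200211"
  "v 4 5 = 21111112"
  "v 4 6 = 2100120"
  "v 4 7 = 12011021"
  "v 4 8 = 22222222"
  "v 5 0 = 1100110"
  "v 5 1 = 11011011"
  "v 5 2 = 21222212"
  "v 5 3 = 2211220"
  "v 5 4 = 12122121"
  "v 5 5 = 22000022"
  "v 5 6 = 22000"
  "v 5 7 = 10200201"
  "v 5 8 = 20111102"
  "v 6 0 = 22200222"
  "v 6 1 = 2111120"
  "v 6 2 = 12022021"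
  "v 6 3 = 20011002"
  "v 6 4 = 222200"
  "v 6 5 = 10100101"
  "v 6 6 = 21122112"
  "v 6 7 = 1000010"
  "v 6 8 = 11211211"
  "v 7 0 = 20122102"
  "v 7 1 = 0"
  "v 7 2 = 10211201"
  "v 7 3 = 21200212"
  "v 7 4 = 1111110"
  "v 7 5 = 11022011"
  "v 7 6 = 22011022"
  "v 7 7 = 2222220"
  "v 7 8 = 12100121"
  "v 8 0 = 21011012"
  "v 8 1 = 1222210"
  "v 8 2 = 11100111"
  "v 8 3 = 22122122"
  "v 8 4 = 2000020"
  "v 8 5 = 12211221"
  "v 8 6 = 20200202"
  "v 8 7 = 111100"
  "v 8 8 = 10022001"
  by (simp_all add: v_def d0_def d1_def d2_def d3_def)

lemma vals1:
  "v 0 (Suc 0) = 22022022"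
  "v (Suc 0) 0 = 10000001"
  "v (Suc 0) (Suc 0) = 20211202"
  "v (Suc 0) 2 = 122100"
  "v (Suc 0) 3 = 11111111"
  "v (Suc 0) 4 = 21022012"
  "v (Suc 0) 5 = 1200210"
  "v (Suc 0) 6 = 12222221"
  "v (Suc 0) 7 = 22100122"
  "v (Suc 0) 8 = 2011020"
  "v 2 (Suc 0) = 21100112"
  "v 3 (Suc 0) = 12200221"
  "v 4 (Suc 0) = 10122101"
  "v 5 (Suc 0) = 11011011"
  "v 6 (Suc 0) = 2111120"
  "v 7 (Suc 0) = 0"
  "v 8 (Suc 0) = 1222210"
  by (simp_all add: v_def d0_def d1_def d2_def d3_def)

lemma rows: "\<forall>i<9. (\<Sum>j<9. v i j) = 99999999"
  unfolding all9 sum9 by (simp add: vals vals1)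

lemma cols: "\<forall>j<9. (\<Sum>i<9. v i j) = 99999999"
  unfolding all9 sum9 by (simp add: vals vals1)

lemma diags: "(\<Sum>i<9. v i i) = 99999999" "(\<Sum>i<9. v i (9 - 1 - i)) = 99999999"
  unfolding sum9 by (simp_all add: vals vals1)

lemma rows2: "\<forall>i<9. (\<Sum>j<9. (v i j)^2) = 1717172174949495"
  unfolding all9 sum9 by (simp add: vals vals1)

lemma cols2: "\<forall>j<9. (\<Sum>i<9. (v i j)^2) = 1717172174949495"
  unfolding all9 sum9 by (simp add: vals vals1)

lemma diags2: "(\<Sum>i<9. (v i i)^2) = 1717172174949495" "(\<Sum>i<9. (v i (9 - 1 - i))^2) = 1717172174949495"
  unfolding sum9 by (simp_all add: vals vals1)

lemma idx:
  "3 * (0::nat) + 0 = 0"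
  "3 * (0::nat) + 1 = 1"
  "3 * (0::nat) + 2 = 2"
  "3 * (1::nat) + 0 = 3"
  "3 * (1::nat) + 1 = 4"
  "3 * (1::nat) + 2 = 5"
  "3 * (2::nat) + 0 = 6"
  "3 * (2::nat) + 1 = 7"
  "3 * (2::nat) + 2 = 8"
  by simp_all

lemma blocks: "\<forall>p<3. \<forall>q<3. (\<Sum>i<3. \<Sum>j<3. v (3*p+i) (3*q+j)) = 99999999"
  unfolding all3 sum3 idx by (simp add: vals vals1)

theorem mainTheorem6:
  shows "\<exists>M :: nat \<Rightarrow> nat \<Rightarrow> nat list.
    (\<forall>i<9. \<forall>j<9. pal8_012 (M i j)) \<and>
    (\<forall>i<9. \<forall>j<9. \<forall>k<9. \<forall>l<9. M i j = M k l \<longrightarrow> i = k \<and> j = l) \<and>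
    bimagic_sq 9 (\<lambda>i j. dec_val (M i j)) 99999999 \<and>
    (\<forall>p<3. \<forall>q<3. (\<Sum>i<3. \<Sum>j<3. dec_val (M (3*p+i) (3*q+j))) = 99999999)"
proof (intro exI[of _ MM] conjI)
  show "\<forall>i<9. \<forall>j<9. pal8_012 (MM i j)" using pal by blast
  show "\<forall>i<9. \<forall>j<9. \<forall>k<9. \<forall>l<9. MM i j = MM k l \<longrightarrow> i = k \<and> j = l" by (rule inj)
  show "bimagic_sq 9 (\<lambda>i j. dec_val (MM i j)) 99999999"
    unfolding bimagic_sq_def magic_sq_def dec_MM
    using rows cols diags rows2 cols2 diags2 by blast
  show "\<forall>p<3. \<forall>q<3. (\<Sum>i<3. \<Sum>j<3. dec_val (MM (3*p+i) (3*q+j))) = 99999999"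
    unfolding dec_MM by (rule blocks)
qed

end
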